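(* Let $\mu_0\cdots\mu_4\neq0$, let $H=\mathcal{V}(\sum_{i=0}^4\mu_i\prod_{j\neq i}X_j)\subset\mathbb{P}^3$, and assume the cubic surface $\mathcal{V}(\sum_i X_i^3/\mu_i)$ is smooth (equivalently, the only singularities of $H$ are the ten nodes $p_{ijk}=\mathcal{V}(X_i,X_j,X_k)$). Suppose there is a conic $C$ contained in the smooth locus of $H$ which meets the lines $\ell_{01}=\mathcal{V}(X_0,X_1)$ and $\ell_{02}=\mathcal{V}(X_0,X_2)$ but does not meet $\ell_{12}=\mathcal{V}(X_1,X_2)$. Then $$\sum_{i=0}^4\mu_i^3-\sum_{i\neq j}\mu_i^2\mu_j+2\sum_{i<j<k}\mu_i\mu_j\mu_k=0,$$ and this cubic form is irreducible.
   Context: $\mathbb{P}^3$ is the hyperplane $\sum_{i=0}^4X_i=0$ in $\mathbb{P}^4$ with coordinates $X_0,\dots,X_4$, over $\mathbb{C}$. The middle sum runs over ordered pairs of distinct indices, the last over 3-element subsets. *)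

theory Defs
  imports "HOL-Analysis.Analysis" "HOL-Computational_Algebra.Polynomial"
begin

text \<open>Points of C^5 are represented by functions nat => complex; only the
coordinates 0..4 matter.  P^3 is the hyperplane sum X_i = 0 in P^4.\<close>

definition in_P3 :: "(nat \<Rightarrow> complex) \<Rightarrow> bool" where
  "in_P3 x \<longleftrightarrow> (\<exists>i<5. x i \<noteq> 0) \<and> (\<Sum>i<5. x i) = 0"

definition pd :: "((nat \<Rightarrow> complex) \<Rightarrow> complex) \<Rightarrow> nat \<Rightarrow> (nat \<Rightarrow> complex) \<Rightarrow> complex" where
  "pd G i x = deriv (\<lambda>t. G (x(i := t))) (x i)"

text \<open>A point of the surface V(G) inside P^3 = V(sum X_i) is singular iff the
gradient of G there is proportional to the gradient (1,...,1) of the hyperplane,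
i.e. all partial derivatives coincide.\<close>
definition sing_pt_P3 :: "((nat \<Rightarrow> complex) \<Rightarrow> complex) \<Rightarrow> (nat \<Rightarrow> complex) \<Rightarrow> bool" where
  "sing_pt_P3 G x \<longleftrightarrow> in_P3 x \<and> G x = 0 \<and> (\<forall>i<5. \<forall>k<5. pd G i x = pd G k x)"

definition smooth_pt_P3 :: "((nat \<Rightarrow> complex) \<Rightarrow> complex) \<Rightarrow> (nat \<Rightarrow> complex) \<Rightarrow> bool" where
  "smooth_pt_P3 G x \<longleftrightarrow> in_P3 x \<and> G x = 0 \<and> \<not> (\<forall>i<5. \<forall>k<5. pd G i x = pd G k x)"

definition smooth_surface_P3 :: "((nat \<Rightarrow> complex) \<Rightarrow> complex) \<Rightarrow> bool" where
  "smooth_surface_P3 G \<longleftrightarrow> (\<forall>x. \<not> sing_pt_P3 G x)"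

definition Hform :: "(nat \<Rightarrow> complex) \<Rightarrow> (nat \<Rightarrow> complex) \<Rightarrow> complex" where
  "Hform \<mu> x = (\<Sum>i<5. \<mu> i * (\<Prod>j\<in>{..<5} - {i}. x j))"

definition Sform :: "(nat \<Rightarrow> complex) \<Rightarrow> (nat \<Rightarrow> complex) \<Rightarrow> complex" where
  "Sform \<mu> x = (\<Sum>i<5. x i ^ 3 / \<mu> i)"

text \<open>A (smooth) conic in P^3: image of P^1 under [s:t] |-> s^2 A + s t B + t^2 C,
with A, B, C linearly independent vectors of the hyperplane sum X_i = 0.\<close>
definition conic_pt :: "(nat \<Rightarrow> complex) \<Rightarrow> (nat \<Rightarrow> complex) \<Rightarrow> (nat \<Rightarrow> complex)
    \<Rightarrow> complex \<Rightarrow> complex \<Rightarrow> nat \<Rightarrow> complex" where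
  "conic_pt A B C s t = (\<lambda>i. s^2 * A i + s * t * B i + t^2 * C i)"

definition conic_data :: "(nat \<Rightarrow> complex) \<Rightarrow> (nat \<Rightarrow> complex) \<Rightarrow> (nat \<Rightarrow> complex) \<Rightarrow> bool" where
  "conic_data A B C \<longleftrightarrow>
     (\<Sum>i<5. A i) = 0 \<and> (\<Sum>i<5. B i) = 0 \<and> (\<Sum>i<5. C i) = 0 \<and>
     (\<forall>a b c. (\<forall>i<5. a * A i + b * B i + c * C i = 0) \<longrightarrow> a = 0 \<and> b = 0 \<and> c = 0)"

definition kform :: "(nat \<Rightarrow> 'a::comm_ring_1) \<Rightarrow> 'a" where
  "kform m = (\<Sum>i<5. m i ^ 3)
     - (\<Sum>i<5. \<Sum>j\<in>{..<5} - {i}. m i ^ 2 * m j)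
     + 2 * (\<Sum>S\<in>{S. S \<subseteq> {..<5::nat} \<and> card S = 3}. \<Prod>i\<in>S. m i)"

text \<open>The polynomial ring C[mu_0,...,mu_4], realised as iterated univariate
polynomials, and its five variables.\<close>
type_synonym mpoly5 = "complex poly poly poly poly poly"

definition mvar :: "nat \<Rightarrow> mpoly5" where
  "mvar i = (if i = 0 then [:[:[:[:monom (1::complex) 1:]:]:]:]
             else if i = 1 then [:[:[:monom (1::complex poly) 1:]:]:]
             else if i = 2 then [:[:monom (1::complex poly poly) 1:]:]
             else if i = 3 then [:monom (1::complex poly poly poly) 1:]
             else monom (1::complex poly poly poly poly) 1)"

end

theory Submission
  imports Defs
begin

definition Esym :: "(nat \<Rightarrow> 'a::comm_ring_1) \<Rightarrow> nat \<Rightarrow> nat set \<Rightarrow> 'a" where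
  "Esym m k A = (\<Sum>S\<in>{S. S \<subseteq> A \<and> card S = k}. \<Prod>i\<in>S. m i)"

lemma subsets_insert:
  assumes "finite A" "a \<notin> A"
  shows "{S. S \<subseteq> insert a A \<and> card S = Suc k} =
         {S. S \<subseteq> A \<and> card S = Suc k} \<union> insert a ` {S. S \<subseteq> A \<and> card S = k}"
proof (rule set_eqI, rule iffI)
  fix S assume S: "S \<in> {S. S \<subseteq> insert a A \<and> card S = Suc k}"
  show "S \<in> {S. S \<subseteq> A \<and> card S = Suc k} \<union> insert a ` {S. S \<subseteq> A \<and> card S = k}"
  proof (cases "a \<in> S")
    case True
    have fin: "finite S" using S assms(1) finite_subset by auto
    have "S = insert a (S - {a})" using True by auto
    moreover have "S - {a} \<subseteq> A" "card (S - {a}) = k" using S True fin by auto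
    ultimately show ?thesis by blast
  next
    case False
    then show ?thesis using S by auto
  qed
next
  fix S assume S: "S \<in> {S. S \<subseteq> A \<and> card S = Suc k} \<union> insert a ` {S. S \<subseteq> A \<and> card S = k}"
  then show "S \<in> {S. S \<subseteq> insert a A \<and> card S = Suc k}"
  proof
    assume "S \<in> insert a ` {S. S \<subseteq> A \<and> card S = k}"
    then obtain T where T: "T \<subseteq> A" "card T = k" "S = insert a T" by auto
    have "finite T" using T assms(1) finite_subset by auto
    moreover have "a \<notin> T" using T assms by auto
    ultimately show ?thesis using T by auto
  qed auto
qed

lemma Esym_insert:
  assumes "finite A" "a \<notin> A"
  shows "Esym m (Suc k) (insert a A) = Esym m (Suc k) A + m a * Esym m k A"
proof -
  have f1: "finite {S. S \<subseteq> A \<and> card S = Suc k}" using assms(1) by auto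
  have f2: "finite (insert a ` {S. S \<subseteq> A \<and> card S = k})" using assms(1) by auto
  have dj: "{S. S \<subseteq> A \<and> card S = Suc k} \<inter> insert a ` {S. S \<subseteq> A \<and> card S = k} = {}"
    using assms(2) by auto
  have inj: "inj_on (insert a) {S. S \<subseteq> A \<and> card S = k}"
    using assms(2) by (auto simp: inj_on_def)
  have "Esym m (Suc k) (insert a A) = Esym m (Suc k) A +
        (\<Sum>S\<in>insert a ` {S. S \<subseteq> A \<and> card S = k}. \<Prod>i\<in>S. m i)"
    unfolding Esym_def subsets_insert[OF assms] by (rule sum.union_disjoint[OF f1 f2 dj])
  also have "(\<Sum>S\<in>insert a ` {S. S \<subseteq> A \<and> card S = k}. \<Prod>i\<in>S. m i) =
      (\<Sum>T\<in>{S. S \<subseteq> A \<and> card S = k}. \<Prod>i\<in>insert a T. m i)"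
    by (rule sum.reindex[OF inj, unfolded comp_def])
  also have "\<dots> = (\<Sum>T\<in>{S. S \<subseteq> A \<and> card S = k}. m a * (\<Prod>i\<in>T. m i))"
  proof (rule sum.cong[OF refl])
    fix T assume "T \<in> {S. S \<subseteq> A \<and> card S = k}"
    then have "finite T" "a \<notin> T" using assms finite_subset by auto
    then show "(\<Prod>i\<in>insert a T. m i) = m a * (\<Prod>i\<in>T. m i)" by simp
  qed
  finally show ?thesis by (simp add: Esym_def sum_distrib_left)
qed

lemma Esym_0: "finite A \<Longrightarrow> Esym m 0 A = 1"
proof -
  assume "finite A"
  then have "{S. S \<subseteq> A \<and> card S = 0} = {{}}" by (auto simp: card_eq_0_iff dest: rev_finite_subset)
  then show ?thesis by (simp add: Esym_def)
qed

lemma Esym_empty: "Esym m (Suc k) {} = 0"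
proof -
  have e: "{S. S \<subseteq> {} \<and> card S = Suc k} = {}" by auto
  show ?thesis unfolding Esym_def e by simp
qed

lemma E3_5: "Esym m 3 {0,1,2,3,4} =
  m 0*m 1*m 2 + m 0*m 1*m 3 + m 0*m 1*m 4 + m 0*m 2*m 3 + m 0*m 2*m 4 + m 0*m 3*m 4
       + m 1*m 2*m 3 + m 1*m 2*m 4 + m 1*m 3*m 4 + m 2*m 3*m 4"
  by (simp add: numeral_eq_Suc Esym_insert Esym_0 Esym_empty algebra_simps)


lemma sum5: "(\<Sum>i<5::nat. g i) = g 0 + g 1 + g 2 + g 3 + g 4"
  by (simp add: lessThan_Suc numeral_eq_Suc ac_simps)

lemma sum5_minus: fixes g :: "nat \<Rightarrow> 'a::ab_group_add" shows "i < 5 \<Longrightarrow> sum g ({..<5::nat} - {i}) = (\<Sum>j<5. g j) - g i"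
  by (simp add: sum_diff1)

lemma kform_expand: "kform m =
  m 0^3 + m 1^3 + m 2^3 + m 3^3 + m 4^3
  - (m 0^2*(m 1+m 2+m 3+m 4) + m 1^2*(m 0+m 2+m 3+m 4) + m 2^2*(m 0+m 1+m 3+m 4)
     + m 3^2*(m 0+m 1+m 2+m 4) + m 4^2*(m 0+m 1+m 2+m 3))
  + 2*(m 0*m 1*m 2 + m 0*m 1*m 3 + m 0*m 1*m 4 + m 0*m 2*m 3 + m 0*m 2*m 4 + m 0*m 3*m 4
       + m 1*m 2*m 3 + m 1*m 2*m 4 + m 1*m 3*m 4 + m 2*m 3*m 4)"
proof -
  have e: "{..<5::nat} = {0,1,2,3,4}" by auto
  have t: "(\<Sum>S\<in>{S. S \<subseteq> {..<5::nat} \<and> card S = 3}. \<Prod>i\<in>S. m i) = Esym m 3 {0,1,2,3,4}"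
    unfolding Esym_def e ..
  have m: "(\<Sum>i<5. \<Sum>j\<in>{..<5} - {i}. m i ^ 2 * m j) =
     m 0^2*(m 1+m 2+m 3+m 4) + m 1^2*(m 0+m 2+m 3+m 4) + m 2^2*(m 0+m 1+m 3+m 4)
     + m 3^2*(m 0+m 1+m 2+m 4) + m 4^2*(m 0+m 1+m 2+m 3)"
  proof -
    have "\<And>i. i < 5 \<Longrightarrow> (\<Sum>j\<in>{..<5} - {i}. m i ^ 2 * m j) = m i ^ 2 * ((\<Sum>j<5. m j) - m i)"
      by (simp add: sum5_minus sum_distrib_left[symmetric])
    then have "(\<Sum>i<5. \<Sum>j\<in>{..<5} - {i}. m i ^ 2 * m j) = (\<Sum>i<5. m i ^ 2 * ((\<Sum>j<5. m j) - m i))"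
      by (intro sum.cong) auto
    then show ?thesis by (simp add: sum5 algebra_simps)
  qed
  show ?thesis unfolding kform_def t m E3_5 sum5 by simp
qed

definition cS :: "(nat \<Rightarrow> 'a::comm_ring_1) \<Rightarrow> 'a" where "cS m = m 0 + m 1 + m 2 + m 3"
definition cQ :: "(nat \<Rightarrow> 'a::comm_ring_1) \<Rightarrow> 'a" where
  "cQ m = 2*(m 0*m 1+m 0*m 2+m 0*m 3+m 1*m 2+m 1*m 3+m 2*m 3) - (m 0^2+m 1^2+m 2^2+m 3^2)"
definition cT :: "(nat \<Rightarrow> 'a::comm_ring_1) \<Rightarrow> 'a" where
  "cT m = m 0^3+m 1^3+m 2^3+m 3^3 - (m 0^2*(m 1+m 2+m 3) + m 1^2*(m 0+m 2+m 3) + m 2^2*(m 0+m 1+m 3)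
     + m 3^2*(m 0+m 1+m 2)) + 2*(m 0*m 1*m 2+m 0*m 1*m 3+m 0*m 2*m 3+m 1*m 2*m 3)"

lemma kform_cubic: "kform m = m 4^3 - cS m * m 4^2 + cQ m * m 4 + cT m"
  unfolding kform_expand cS_def cQ_def cT_def by (simp add: algebra_simps power2_eq_square power3_eq_cube)

definition rv :: "nat \<Rightarrow> complex poly poly poly poly" where
  "rv i = (if i = 0 then [:[:[:monom (1::complex) 1:]:]:]
             else if i = 1 then [:[:monom (1::complex poly) 1:]:]
             else if i = 2 then [:monom (1::complex poly poly) 1:]
             else monom (1::complex poly poly poly) 1)"

lemma mvar_lt4: "i < 4 \<Longrightarrow> mvar i = [:rv i:]"
  by (auto simp: mvar_def rv_def)

lemma mvar_4: "mvar 4 = [:0, 1:]"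
  by (simp add: mvar_def monom_Suc)

lemma pc_simps:
  fixes a b :: "'a::comm_ring_1"
  shows "[:a:] + [:b:] = [:a + b:]" "[:a:] * [:b:] = [:a*b:]" "[:a:] - [:b:] = [:a - b:]"
    "[:a:]^n = [:a^n:]" "(2::'a poly) = [:2:]"
  by (simp_all add: poly_const_pow numeral_poly)

lemma cS_const: "cS (\<lambda>i. [:f i:]) = [:cS f:]"
  by (simp add: cS_def pc_simps)
lemma cQ_const: "cQ (\<lambda>i. [:f i:]) = [:cQ f:]"
  by (simp add: cQ_def pc_simps)
lemma cT_const: "cT (\<lambda>i. [:f i:]) = [:cT f:]"
  by (simp add: cT_def pc_simps)

lemma cS_cong: "(\<And>i. i < 4 \<Longrightarrow> f i = g i) \<Longrightarrow> cS f = cS g" by (simp add: cS_def)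
lemma cQ_cong: "(\<And>i. i < 4 \<Longrightarrow> f i = g i) \<Longrightarrow> cQ f = cQ g" by (simp add: cQ_def)
lemma cT_cong: "(\<And>i. i < 4 \<Longrightarrow> f i = g i) \<Longrightarrow> cT f = cT g" by (simp add: cT_def)

lemma kform_mvar: "kform mvar = [:cT rv, cQ rv, - cS rv, 1:]"
proof -
  have "cS mvar = cS (\<lambda>i. [:rv i:])" "cQ mvar = cQ (\<lambda>i. [:rv i:])" "cT mvar = cT (\<lambda>i. [:rv i:])"
    by (auto intro!: cS_cong cQ_cong cT_cong simp: mvar_lt4)
  then show ?thesis unfolding kform_cubic mvar_4 by (simp add: cS_const cQ_const cT_const monom_Suc power3_eq_cube power2_eq_square)
qed


definition psi :: "complex poly poly poly poly \<Rightarrow> complex poly" where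
  "psi p = poly (poly (poly p 1) 1) 1"

lemma psi_simps: "psi (a + b) = psi a + psi b" "psi (a * b) = psi a * psi b" "psi (a - b) = psi a - psi b"
  "psi (a ^ n) = psi a ^ n" "psi 2 = 2" "psi (- a) = - psi a"
  by (simp_all add: psi_def poly_power)

lemma psi_rv: "psi (rv 0) = [:0,1:]" "psi (rv 1) = 1" "psi (rv 2) = 1" "psi (rv 3) = 1"
  by (simp_all add: psi_def rv_def monom_Suc)

lemma noroot: "r^3 - cS rv * r^2 + cQ rv * r + cT rv \<noteq> 0"
proof
  assume eq0: "r^3 - cS rv * r^2 + cQ rv * r + cT rv = 0"
  define u :: "complex poly" where "u = psi (rv 0)"
  have u01: "u = [:0,1:]" by (simp add: u_def psi_rv)
  define y where "y = psi r"
  have "psi (r^3 - cS rv * r^2 + cQ rv * r + cT rv) = 0" using eq0 by (simp add: psi_def)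
  then have e1: "y^3 - (u+3)*y^2 + (6*u+3-u^2)*y + (u-1)^3 = 0"
    unfolding y_def cS_def cQ_def cT_def psi_simps psi_rv(2,3,4) u_def[symmetric]
    by (simp add: algebra_simps power2_eq_square power3_eq_cube)
  define z where "z = y - 1"
  have e2: "z^3 - u*z^2 + (4*u-u^2)*z + u*(u^2-4*u+8) = 0"
  proof -
    have "z^3 - u*z^2 + (4*u-u^2)*z + u*(u^2-4*u+8) = y^3 - (u+3)*y^2 + (6*u+3-u^2)*y + (u-1)^3"
      unfolding z_def by (simp add: algebra_simps power2_eq_square power3_eq_cube)
    then show ?thesis using e1 by simp
  qed
  have pu: "poly u 0 = 0" by (simp add: u01)
  have "poly (z^3 - u*z^2 + (4*u-u^2)*z + u*(u^2-4*u+8)) 0 = 0" using e2 by simp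
  then have "poly z 0 ^ 3 = 0" by (simp add: pu poly_power)
  then have "poly z 0 = 0" by simp
  then have "u dvd z" by (simp add: poly_eq_0_iff_dvd u01)
  then obtain w where w: "z = u * w" by (auto elim: dvdE)
  have "u * (u^2*w^3 - u^2*w^2 + (4*u-u^2)*w + (u^2-4*u+8)) = 0"
  proof -
    have "u * (u^2*w^3 - u^2*w^2 + (4*u-u^2)*w + (u^2-4*u+8)) = z^3 - u*z^2 + (4*u-u^2)*z + u*(u^2-4*u+8)"
      unfolding w by (simp add: algebra_simps power2_eq_square power3_eq_cube)
    then show ?thesis using e2 by simp
  qed
  moreover have "u \<noteq> 0" by (simp add: u01)
  ultimately have "u^2*w^3 - u^2*w^2 + (4*u-u^2)*w + (u^2-4*u+8) = 0" by simp
  then have "poly (u^2*w^3 - u^2*w^2 + (4*u-u^2)*w + (u^2-4*u+8)) 0 = 0" by simp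
  then show False by (simp add: pu poly_power)
qed

lemma irred_kform: "irreducible (kform mvar)"
proof (rule irreducibleI)
  let ?f = "kform mvar"
  have df: "degree ?f = 3" by (simp add: kform_mvar)
  show "?f \<noteq> 0" by (simp add: kform_mvar)
  show "\<not> is_unit ?f"
  proof
    assume "is_unit ?f"
    then obtain g where g: "1 = ?f * g" by (auto elim: dvdE)
    then have "g \<noteq> 0" by auto
    then have "degree (?f * g) = 3 + degree g" using df \<open>?f \<noteq> 0\<close> by (simp add: degree_mult_eq)
    then show False using g by (metis add_is_0 degree_1 zero_neq_numeral)
  qed
  fix a b assume ab: "?f = a * b"
  have a0: "a \<noteq> 0" and b0: "b \<noteq> 0" using ab \<open>?f \<noteq> 0\<close> by auto
  have dab: "degree a + degree b = 3" using ab df a0 b0 by (simp add: degree_mult_eq)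
  have l1: "lead_coeff ?f = 1" by (simp add: kform_mvar)
  have lab: "lead_coeff a * lead_coeff b = 1" using l1 unfolding ab lead_coeff_mult .
  have root: False if "degree p = 1" "lead_coeff p * lead_coeff q = 1" "?f = p * q" for p q
  proof -
    have dp: "degree p = 1" using that(1) .
    obtain p0 p1 where pp: "p = [:p0, p1:]" using degree1_coeffs[OF dp] by blast
    have p1: "p1 * lead_coeff q = 1" using that(1,2) pp by simp
    define r where "r = - p0 * lead_coeff q"
    have "poly p r = 0" using p1 by (simp add: pp r_def algebra_simps)
    then have "poly ?f r = 0" using that(3) by simp
    then have "r^3 - cS rv * r^2 + cQ rv * r + cT rv = 0"
      by (simp add: kform_mvar algebra_simps power2_eq_square power3_eq_cube)
    then show False using noroot by blast
  qed
  show "is_unit a \<or> is_unit b"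
  proof (cases "degree a = 0")
    case True
    then have "a = [:lead_coeff a:]" by (metis degree_0_id)
    moreover have "lead_coeff a dvd 1" using dvd_triv_left[of "lead_coeff a" "lead_coeff b"] lab by simp
    ultimately have "is_unit a" by (metis is_unit_const_poly_iff)
    then show ?thesis ..
  next
    case False
    show ?thesis
    proof (cases "degree b = 0")
      case True
      then have "b = [:lead_coeff b:]" by (metis degree_0_id)
      moreover have "lead_coeff b dvd 1" using dvd_triv_right[of "lead_coeff b" "lead_coeff a"] lab by simp
      ultimately have "is_unit b" by (metis is_unit_const_poly_iff)
      then show ?thesis ..
    next
      case False
      with \<open>degree a \<noteq> 0\<close> dab have "degree a = 1 \<or> degree b = 1" by arith
      then show ?thesis
      proof
        assume "degree a = 1" then show ?thesis using root lab ab by blast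
      next
        assume "degree b = 1" then show ?thesis using root[of b a] lab ab by (simp add: mult.commute)
      qed
    qed
  qed
qed

lemma Hform_expand: "Hform \<mu> x = \<mu> 0 * (x 1 * x 2 * x 3 * x 4) + \<mu> 1 * (x 0 * x 2 * x 3 * x 4)
   + \<mu> 2 * (x 0 * x 1 * x 3 * x 4) + \<mu> 3 * (x 0 * x 1 * x 2 * x 4) + \<mu> 4 * (x 0 * x 1 * x 2 * x 3)"
proof -
  have e: "{..<5::nat} - {0} = {1,2,3,4}" "{..<5::nat} - {1} = {0,2,3,4}" "{..<5::nat} - {2} = {0,1,3,4}"
    "{..<5::nat} - {3} = {0,1,2,4}" "{..<5::nat} - {4} = {0,1,2,3}" by auto
  show ?thesis unfolding Hform_def sum5 e by (simp add: ac_simps)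
qed

lemma H_two_zero:
  assumes "i < 5" "j < 5" "i \<noteq> j" "x i = 0" "x j = 0"
  shows "Hform \<mu> x = 0"
  unfolding Hform_def
proof (rule sum.neutral, intro ballI)
  fix l assume "l \<in> {..<5::nat}"
  have "\<exists>a\<in>{..<5} - {l}. x a = 0" using assms by (cases "l = i") auto
  then have "prod x ({..<5} - {l}) = 0" by (simp add: prod_zero_iff)
  then show "\<mu> l * prod x ({..<5} - {l}) = 0" by simp
qed

lemma node_sing:
  assumes "in_P3 x" "i<5" "j<5" "k<5" "i\<noteq>j" "i\<noteq>k" "j\<noteq>k" "x i = 0" "x j = 0" "x k = 0"
  shows "sing_pt_P3 (Hform \<mu>) x"
proof -
  have H0: "Hform \<mu> x = 0" using H_two_zero[of i j x] assms by auto
  have pd0: "pd (Hform \<mu>) l x = 0" for l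
  proof -
    have "(\<lambda>t. Hform \<mu> (x(l:=t))) = (\<lambda>t. 0)"
    proof
      fix t
      show "Hform \<mu> (x(l:=t)) = 0"
      proof (cases "l = i")
        case True
        then show ?thesis using H_two_zero[of j k "x(l:=t)"] assms by auto
      next
        case False
        show ?thesis
        proof (cases "l = j")
          case True
          then show ?thesis using H_two_zero[of i k "x(l:=t)"] assms \<open>l \<noteq> i\<close> by auto
        next
          case False
          then show ?thesis using H_two_zero[of i j "x(l:=t)"] assms \<open>l \<noteq> i\<close> by auto
        qed
      qed
    qed
    then show ?thesis unfolding pd_def by simp
  qed
  show ?thesis unfolding sing_pt_P3_def using assms(1) H0 pd0 by simp
qed

lemma no_node:
  assumes "smooth_pt_P3 (Hform \<mu>) x" "i<5" "j<5" "k<5" "i\<noteq>j" "i\<noteq>k" "j\<noteq>k"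
  shows "\<not> (x i = 0 \<and> x j = 0 \<and> x k = 0)"
proof
  assume z: "x i = 0 \<and> x j = 0 \<and> x k = 0"
  have "in_P3 x" using assms(1) by (simp add: smooth_pt_P3_def)
  then have "sing_pt_P3 (Hform \<mu>) x" using node_sing[of x i j k \<mu>] assms z by auto
  then show False using assms(1) unfolding sing_pt_P3_def smooth_pt_P3_def by blast
qed

lemma cont_zero:
  fixes \<phi> :: "complex \<Rightarrow> complex"
  assumes "continuous_on UNIV \<phi>" "finite S" "\<And>t. t \<notin> S \<Longrightarrow> \<phi> t = 0"
  shows "\<phi> z = 0"
proof -
  have ev: "eventually (\<lambda>w. \<phi> w = 0) (at z)"
    unfolding eventually_at_topological
  proof (intro exI conjI ballI impI)
    show "open (- (S - {z}))" by (rule open_Compl[OF finite_imp_closed]) (use assms(2) in simp)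
    show "z \<in> - (S - {z})" by simp
    fix w assume "w \<in> - (S - {z})" "w \<noteq> z"
    then have "w \<notin> S" by auto
    then show "\<phi> w = 0" using assms(3) by simp
  qed
  have "isCont \<phi> z" using assms(1) by (simp add: continuous_on_eq_continuous_at)
  then have l1: "(\<phi> \<longlongrightarrow> \<phi> z) (at z)" by (simp add: isCont_def)
  have l2: "(\<phi> \<longlongrightarrow> 0) (at z)" using ev by (rule tendsto_eventually)
  show ?thesis using tendsto_unique[OF at_neq_bot l1 l2] .
qed

lemma cont_test: "continuous_on UNIV (\<lambda>t::complex. (a + b*t)*(c*t^2 + d) - e)"
  by (intro continuous_intros)

lemma FA:
  fixes m0 m1 m2 m3 m4 K p q :: complex
  assumes L1: "m1^2*p + K*q + (m3+m4)*m1*K + (K - m1*m2)*K = 0"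
    and L2: "K*p + m2^2*q + (m3+m4)*m2*K + (K - m1*m2)*K = 0"
    and L3: "-2*m1*p - 2*m2*q - (m3+m4)*(K + m1*m2) + (K - m1*m2)*(m0 - m1 - m2) = 0"
    and L4: "p*q = m3*m4*K"
    and nz: "K \<noteq> 0" "K - m1*m2 \<noteq> 0" "m0 \<noteq> 0" "m1 \<noteq> 0" "m2 \<noteq> 0"
  shows "((m3+m4-m1-m2)+m0)*((m3+m4-m1-m2)+2*m2-m0)*((m3+m4-m1-m2)+2*m1-m0)
          - 4*m3*m4*((m3+m4-m1-m2)-m0) = 0"
proof -
  define w where "w = m3+m4-m1-m2"
  define A1 where "A1 = m1*(m1-(m3+m4))"
  define A2 where "A2 = m2*(m2-(m3+m4))"
  have "(K - m1*m2)*(p*(K+m1*m2) + K*(K-A2)) =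
        K*(K*p + m2^2*q + (m3+m4)*m2*K + (K - m1*m2)*K) - m2^2*(m1^2*p + K*q + (m3+m4)*m1*K + (K - m1*m2)*K)"
    unfolding A2_def by algebra
  then have "(K - m1*m2)*(p*(K+m1*m2) + K*(K-A2)) = 0" using L1 L2 by simp
  then have "p*(K+m1*m2) + K*(K-A2) = 0" using nz(2) mult_eq_0_iff by blast
  then have P1: "p*(K+m1*m2) = -K*(K-A2)" by algebra
  have "(K - m1*m2)*(q*(K+m1*m2) + K*(K-A1)) =
        K*(m1^2*p + K*q + (m3+m4)*m1*K + (K - m1*m2)*K) - m1^2*(K*p + m2^2*q + (m3+m4)*m2*K + (K - m1*m2)*K)"
    unfolding A1_def by algebra
  then have "(K - m1*m2)*(q*(K+m1*m2) + K*(K-A1)) = 0" using L1 L2 by simp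
  then have "q*(K+m1*m2) + K*(K-A1) = 0" using nz(2) mult_eq_0_iff by blast
  then have Q1: "q*(K+m1*m2) = -K*(K-A1)" by algebra
  have "(K - m1*m2)*((w-m0)*K - m1*m2*(w+m0)) =
     -2*m2*(m1^2*p + K*q + (m3+m4)*m1*K + (K - m1*m2)*K) - 2*m1*(K*p + m2^2*q + (m3+m4)*m2*K + (K - m1*m2)*K)
     - (m1*m2+K)*(-2*m1*p - 2*m2*q - (m3+m4)*(K + m1*m2) + (K - m1*m2)*(m0 - m1 - m2))"
    unfolding w_def by algebra
  then have "(K - m1*m2)*((w-m0)*K - m1*m2*(w+m0)) = 0" using L1 L2 L3 by simp
  then have "(w-m0)*K - m1*m2*(w+m0) = 0" using nz(2) mult_eq_0_iff by blast
  then have E3: "(w-m0)*K = m1*m2*(w+m0)" by algebra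
  show ?thesis
  proof (cases "K + m1*m2 = 0")
    case True
    then have Km: "K = - m1*m2" by algebra
    have "m1*m2*(2*w) = 0" using E3 Km by algebra
    then have w0: "w = 0" using nz by simp
    then have sig: "m3 + m4 = m1 + m2" unfolding w_def by (simp add: algebra_simps)
    have e1: "m1*(m1*p - m2*q - m1*m2*(m1-m2)) = 0" using L1 Km sig by algebra
    have e1': "m1*p - m2*q = m1*m2*(m1-m2)" using e1 nz by simp
    have e3': "m1*p + m2*q = -m1*m2*(m0-m1-m2)" using L3 Km sig by algebra
    have pp: "m1*(2*p - m2*(2*m1-m0)) = 0" using e1' e3' by algebra
    have qq: "m2*(2*q - m1*(2*m2-m0)) = 0" using e1' e3' by algebra
    have p2: "2*p = m2*(2*m1-m0)" using pp nz by simp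
    have q2: "2*q = m1*(2*m2-m0)" using qq nz by simp
    have "m1*m2*((2*m1-m0)*(2*m2-m0) + 4*m3*m4) = 0"
    proof -
      have "m1*m2*((2*m1-m0)*(2*m2-m0) + 4*m3*m4) = (2*p)*(2*q) - 4*(m3*m4*K)"
        using p2 q2 Km by algebra
      then show ?thesis using L4 by simp
    qed
    then have c: "(2*m1-m0)*(2*m2-m0) + 4*m3*m4 = 0" using nz by simp
    have "((m3+m4-m1-m2)+m0)*((m3+m4-m1-m2)+2*m2-m0)*((m3+m4-m1-m2)+2*m1-m0)
          - 4*m3*m4*((m3+m4-m1-m2)-m0) = m0*((2*m1-m0)*(2*m2-m0) + 4*m3*m4)"
      using sig by algebra
    then show ?thesis using c by simp
  next
    case False
    have "(p*(K+m1*m2))*(q*(K+m1*m2)) = K*(m3*m4*(K+m1*m2)^2)"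
      using L4 by (simp add: algebra_simps power2_eq_square)
    moreover have "(p*(K+m1*m2))*(q*(K+m1*m2)) = K*(K*(K-A1)*(K-A2))" unfolding P1 Q1 by algebra
    ultimately have "K*(K*(K-A1)*(K-A2)) = K*(m3*m4*(K+m1*m2)^2)" by simp
    then have M: "K*(K-A1)*(K-A2) = m3*m4*(K+m1*m2)^2" using nz(1) by simp
    have wnz: "w \<noteq> 0"
    proof
      assume "w = 0"
      then have "m0*(K + m1*m2) = 0" using E3 by algebra
      then show False using False nz by simp
    qed
    have Dnz: "w - m0 \<noteq> 0"
    proof
      assume "w - m0 = 0"
      then have "m1*m2*(2*m0) = 0" using E3 by algebra
      then show False using nz by simp
    qed
    have a: "(w-m0)*(K-A1) = m1*w*(w+2*m2-m0)" using E3 unfolding A1_def w_def by algebra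
    have b: "(w-m0)*(K-A2) = m2*w*(w+2*m1-m0)" using E3 unfolding A2_def w_def by algebra
    have c: "(w-m0)*(K+m1*m2) = 2*m1*m2*w" using E3 by algebra
    have "(w-m0)^3*(K*(K-A1)*(K-A2)) = ((w-m0)*K)*((w-m0)*(K-A1))*((w-m0)*(K-A2))"
      by algebra
    also have "\<dots> = (m1*m2*(w+m0))*(m1*w*(w+2*m2-m0))*(m2*w*(w+2*m1-m0))" using E3 a b by simp
    finally have l: "(w-m0)^3*(K*(K-A1)*(K-A2)) = (m1*m2*w)^2*((w+m0)*(w+2*m2-m0)*(w+2*m1-m0))"
      by algebra
    have "(w-m0)^3*(m3*m4*(K+m1*m2)^2) = (w-m0)*m3*m4*((w-m0)*(K+m1*m2))^2" by algebra
    also have "\<dots> = (m1*m2*w)^2*(4*m3*m4*(w-m0))" using c by algebra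
    finally have r: "(w-m0)^3*(m3*m4*(K+m1*m2)^2) = (m1*m2*w)^2*(4*m3*m4*(w-m0))" .
    have "(m1*m2*w)^2*((w+m0)*(w+2*m2-m0)*(w+2*m1-m0)) = (w-m0)^3*(K*(K-A1)*(K-A2))"
      using l by simp
    also have "\<dots> = (w-m0)^3*(m3*m4*(K+m1*m2)^2)" using M by simp
    also have "\<dots> = (m1*m2*w)^2*(4*m3*m4*(w-m0))" using r by simp
    finally have "(m1*m2*w)^2*((w+m0)*(w+2*m2-m0)*(w+2*m1-m0)) = (m1*m2*w)^2*(4*m3*m4*(w-m0))" .
    then have "(w+m0)*(w+2*m2-m0)*(w+2*m1-m0) = 4*m3*m4*(w-m0)" using nz wnz by simp
    then show ?thesis unfolding w_def by simp
  qed
qed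

definition qf :: "complex \<Rightarrow> complex \<Rightarrow> complex \<Rightarrow> complex \<Rightarrow> complex \<Rightarrow> complex" where
  "qf u0 u1 u2 s t = u0* s^2 + u1* s*t + u2*t^2"

lemma qf_cont: "continuous_on UNIV (\<lambda>t. qf u0 u1 u2 s t)"
  unfolding qf_def by (intro continuous_intros)

lemma sq_factor:
  fixes u0 u1 u2 v0 v1 v2 w0 w1 w2 r1 r2 :: complex
  assumes r: "r1 \<noteq> 0" "r2 \<noteq> 0"
    and UV: "\<And>s t. s \<noteq> 0 \<Longrightarrow> t \<noteq> 0 \<Longrightarrow> qf u0 u1 u2 s t * qf v0 v1 v2 s t = (r2* s - r1*t)^2 * qf w0 w1 w2 s t"
    and U0: "qf u0 u1 u2 r1 r2 = 0"
    and V0: "qf v0 v1 v2 r1 r2 \<noteq> 0"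
  shows "\<forall>s t. qf u0 u1 u2 s t = (u0/r2^2) * (r2* s - r1*t)^2"
proof -
  have fac: "r1*r2*qf u0 u1 u2 s t = (r2* s - r1*t)*(u0*r1* s - u2*r2*t)" for s t
  proof -
    have "r1*r2*qf u0 u1 u2 s t - (r2* s - r1*t)*(u0*r1* s - u2*r2*t) = s*t*qf u0 u1 u2 r1 r2"
      unfolding qf_def by algebra
    then show ?thesis using U0 by simp
  qed
  define \<phi> where "\<phi> t = (u0*r1*r1 - u2*r2*t) * qf v0 v1 v2 r1 t - r1*r2*(r2*r1 - r1*t) * qf w0 w1 w2 r1 t" for t
  have cphi: "continuous_on UNIV \<phi>" unfolding \<phi>_def qf_def by (intro continuous_intros)
  have "\<phi> t = 0" if "t \<notin> {0, r2}" for t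
  proof -
    have t0: "t \<noteq> 0" "t \<noteq> r2" using that by auto
    have l0: "r2*r1 - r1*t \<noteq> 0" using t0 r by (metis mult.commute mult_cancel_left right_minus_eq)
    have e: "r1*r2*qf u0 u1 u2 r1 t = (r2*r1 - r1*t)*(u0*r1*r1 - u2*r2*t)" by (rule fac)
    have "(r2*r1 - r1*t) * ((u0*r1*r1 - u2*r2*t) * qf v0 v1 v2 r1 t) =
          (r1*r2*qf u0 u1 u2 r1 t) * qf v0 v1 v2 r1 t" unfolding e by algebra
    also have "\<dots> = r1*r2*(qf u0 u1 u2 r1 t * qf v0 v1 v2 r1 t)" by algebra
    also have "\<dots> = r1*r2*((r2*r1 - r1*t)^2 * qf w0 w1 w2 r1 t)" using UV[of r1 t] r t0 by simp
    finally have "(r2*r1 - r1*t) * (\<phi> t) = 0" unfolding \<phi>_def by algebra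
    then show ?thesis using l0 by simp
  qed
  then have "\<phi> r2 = 0" using cont_zero[OF cphi, of "{0, r2}"] by blast
  then have "(u0*r1*r1 - u2*r2*r2) * qf v0 v1 v2 r1 r2 = 0" unfolding \<phi>_def by simp
  then have key: "u0*r1*r1 = u2*r2*r2" using V0 by simp
  show ?thesis
  proof (intro allI)
    fix s t
    have "r1*r2*r2*qf u0 u1 u2 s t = (r2* s - r1*t)*(r2*(u0*r1* s - u2*r2*t))" using fac[of s t] by algebra
    also have "r2*(u0*r1* s - u2*r2*t) = u0*r1*(r2* s - r1*t)" using key by algebra
    finally have "r1*r2*r2*qf u0 u1 u2 s t = r1*(u0*(r2* s - r1*t)^2)" by algebra
    then have "r2*r2*qf u0 u1 u2 s t = u0*(r2* s - r1*t)^2" using r by (simp add: mult.assoc)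
    then show "qf u0 u1 u2 s t = (u0/r2^2) * (r2* s - r1*t)^2" using r
      by (simp add: field_simps power2_eq_square)
  qed
qed

definition altk :: "complex \<Rightarrow> complex \<Rightarrow> complex \<Rightarrow> complex \<Rightarrow> complex \<Rightarrow> complex" where
  "altk m0 m1 m2 m3 m4 = ((m3+m4-m1-m2)+m0)*((m3+m4-m1-m2)+2*m2-m0)*((m3+m4-m1-m2)+2*m1-m0)
          - 4*m3*m4*((m3+m4-m1-m2)-m0)"

lemma altk_swap: "altk m0 m1 m2 m4 m3 = altk m0 m1 m2 m3 m4"
  unfolding altk_def by (simp add: ac_simps)

lemma kform_altk: "kform m = altk (m 0) (m 1) (m 2) (m 3) (m 4)"
  unfolding kform_expand altk_def by algebra

text \<open>Common hypotheses of the two subcases. X3 = qf f g h, X4 = qf f' g' h'.\<close>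

lemma caseA:
  fixes m0 m1 m2 m3 m4 c d f g h f' g' h' :: complex
  assumes nz: "m0 \<noteq> 0" "m1 \<noteq> 0" "m2 \<noteq> 0" "m3 \<noteq> 0" "m4 \<noteq> 0" "c \<noteq> 0" "d \<noteq> 0" "c*d - m1*m2 \<noteq> 0"
    and HG: "\<And>s t. s \<noteq> 0 \<Longrightarrow> t \<noteq> 0 \<Longrightarrow>
      (c*d - m1*m2) * qf f g h s t * qf f' g' h' s t
      + (c*t - m1* s)*(d* s - m2*t)*(m3 * qf f' g' h' s t + m4 * qf f g h s t) = 0"
    and z1: "qf f g h c m1 = 0" and z2: "qf f g h m2 d = 0" and nz4: "qf f' g' h' c m1 \<noteq> 0"
  shows False
proof -
  define k where "k = c*d - m1*m2"
  define M where "M s t = (c*t - m1* s)*(d* s - m2*t)" for s t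
  define z1c where "z1c = m1*d*g + f*(c*d + m1*m2)"
  define z2c where "z2c = m1*d*h - f*c*m2"
  have a1: "m1*(z1c*c + z2c*m1) = m1*d*qf f g h c m1" unfolding z1c_def z2c_def qf_def by algebra
  have a2: "d*(z1c*m2 + z2c*d) = m1*d*qf f g h m2 d" unfolding z1c_def z2c_def qf_def by algebra
  have b1: "z1c*c + z2c*m1 = 0" using a1 z1 nz by simp
  have b2: "z1c*m2 + z2c*d = 0" using a2 z2 nz by simp
  have "k*z1c = d*(z1c*c + z2c*m1) - m1*(z1c*m2 + z2c*d)" unfolding k_def by algebra
  then have "k*z1c = 0" using b1 b2 by simp
  then have zz1: "z1c = 0" using nz(8) k_def by simp
  have "k*z2c = c*(z1c*m2 + z2c*d) - m2*(z1c*c + z2c*m1)" unfolding k_def by algebra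
  then have "k*z2c = 0" using b1 b2 by simp
  then have zz2: "z2c = 0" using nz(8) k_def by simp
  have X3M: "m1*d*qf f g h s t = - f * M s t" for s t
  proof -
    have "m1*d*qf f g h s t + f * M s t = z1c* s*t + z2c*t^2" unfolding qf_def M_def z1c_def z2c_def by algebra
    then show ?thesis using zz1 zz2 by algebra
  qed
  define \<phi> where "\<phi> t = (m3*m1*d - k*f) * qf f' g' h' c t - m4*f*M c t" for t
  have cphi: "continuous_on UNIV \<phi>" unfolding \<phi>_def qf_def M_def by (intro continuous_intros)
  have phi0: "\<phi> t = 0" if "t \<notin> {0, m1, d*c/m2}" for t
  proof -
    have t0: "t \<noteq> 0" "t \<noteq> m1" "t \<noteq> d*c/m2" using that by auto
    have Mnz: "M c t \<noteq> 0"
    proof -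
      have "c*t - m1*c \<noteq> 0" using t0 nz by (metis mult.commute mult_cancel_left right_minus_eq)
      moreover have "d*c - m2*t \<noteq> 0" using t0 nz by (auto simp: field_simps)
      ultimately show ?thesis unfolding M_def by simp
    qed
    have "m1*d*(k * qf f g h c t * qf f' g' h' c t + M c t * (m3 * qf f' g' h' c t + m4 * qf f g h c t)) = 0"
      using HG[of c t] nz t0 unfolding k_def M_def by simp
    moreover have "m1*d*(k * qf f g h c t * qf f' g' h' c t + M c t * (m3 * qf f' g' h' c t + m4 * qf f g h c t))
       = M c t * \<phi> t"
    proof -
      have "m1*d*(k * qf f g h c t * qf f' g' h' c t + M c t * (m3 * qf f' g' h' c t + m4 * qf f g h c t))
        = k * (m1*d*qf f g h c t) * qf f' g' h' c t + M c t * (m3*m1*d * qf f' g' h' c t + m4 * (m1*d*qf f g h c t))"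
        by algebra
      also have "\<dots> = M c t * \<phi> t" unfolding X3M \<phi>_def by algebra
      finally show ?thesis .
    qed
    ultimately show ?thesis using Mnz by simp
  qed
  have fin: "finite {0, m1, d*c/m2}" by simp
  have "\<phi> m1 = 0" using cont_zero[OF cphi fin] phi0 by blast
  moreover have "M c m1 = 0" unfolding M_def by simp
  ultimately have "(m3*m1*d - k*f) * qf f' g' h' c m1 = 0" unfolding \<phi>_def by simp
  then have kf: "k*f = m3*m1*d" using nz4 by simp
  have "\<phi> 0 = 0" using cont_zero[OF cphi fin] phi0 by blast
  then have "m4*f*M c 0 = 0" unfolding \<phi>_def using kf by simp
  moreover have "M c 0 \<noteq> 0" unfolding M_def using nz by simp
  ultimately have "f = 0" using nz by simp
  then show False using kf nz by simp
qed


lemma caseC: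
  fixes m0 m1 m2 m3 m4 c d f g h f' g' h' :: complex
  assumes nz: "m0 \<noteq> 0" "m1 \<noteq> 0" "m2 \<noteq> 0" "m3 \<noteq> 0" "m4 \<noteq> 0" "c \<noteq> 0" "d \<noteq> 0" "c*d - m1*m2 \<noteq> 0"
    and sums: "f + f' = -d" "g + g' = -(m0 - m1 - m2)" "h + h' = -c"
    and HG: "\<And>s t. s \<noteq> 0 \<Longrightarrow> t \<noteq> 0 \<Longrightarrow>
      (c*d - m1*m2) * qf f g h s t * qf f' g' h' s t
      + (c*t - m1* s)*(d* s - m2*t)*(m3 * qf f' g' h' s t + m4 * qf f g h s t) = 0"
    and z1: "qf f g h c m1 = 0" and z2: "qf f' g' h' m2 d = 0"
    and nz4: "qf f' g' h' c m1 \<noteq> 0" and nz3: "qf f g h m2 d \<noteq> 0"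
  shows "altk m0 m1 m2 m3 m4 = 0"
proof -
  define k where "k = c*d - m1*m2"
  define M where "M s t = (c*t - m1* s)*(d* s - m2*t)" for s t
  define u0 where "u0 = k*f - m3*m1*d"
  define u1 where "u1 = k*g + m3*(c*d + m1*m2)"
  define u2 where "u2 = k*h - m3*c*m2"
  define v0 where "v0 = k*f' - m4*m1*d"
  define v1 where "v1 = k*g' + m4*(c*d + m1*m2)"
  define v2 where "v2 = k*h' - m4*c*m2"
  have U: "qf u0 u1 u2 s t = k * qf f g h s t + m3 * M s t" for s t
    unfolding qf_def u0_def u1_def u2_def M_def by algebra
  have V: "qf v0 v1 v2 s t = k * qf f' g' h' s t + m4 * M s t" for s t
    unfolding qf_def v0_def v1_def v2_def M_def by algebra
  have UV: "qf u0 u1 u2 s t * qf v0 v1 v2 s t = m3*m4*(M s t)^2" if "s \<noteq> 0" "t \<noteq> 0" for s t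
  proof -
    have "qf u0 u1 u2 s t * qf v0 v1 v2 s t = k * (k * qf f g h s t * qf f' g' h' s t
      + (c*t - m1* s)*(d* s - m2*t)*(m3 * qf f' g' h' s t + m4 * qf f g h s t)) + m3*m4*(M s t)^2"
      unfolding U V M_def by algebra
    then show ?thesis using HG[OF that] k_def by simp
  qed
  have UV1: "qf u0 u1 u2 s t * qf v0 v1 v2 s t = (m1* s - c*t)^2 * qf (m3*m4*d^2) (-2*m3*m4*d*m2) (m3*m4*m2^2) s t"
    if "s \<noteq> 0" "t \<noteq> 0" for s t
    using UV[OF that] unfolding M_def qf_def by algebra
  have UV2: "qf v0 v1 v2 s t * qf u0 u1 u2 s t = (d* s - m2*t)^2 * qf (m3*m4*m1^2) (-2*m3*m4*m1*c) (m3*m4*c^2) s t"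
    if "s \<noteq> 0" "t \<noteq> 0" for s t
    using UV[OF that] unfolding M_def qf_def by algebra
  have Mc: "M c m1 = 0" "M m2 d = 0" unfolding M_def by simp_all
  have kz: "k \<noteq> 0" using nz k_def by simp
  have U0: "qf u0 u1 u2 c m1 = 0" using U[of c m1] z1 Mc by simp
  have V0: "qf v0 v1 v2 c m1 \<noteq> 0" using V[of c m1] nz4 Mc kz by simp
  have U0': "qf u0 u1 u2 m2 d \<noteq> 0" using U[of m2 d] nz3 Mc kz by simp
  have V0': "qf v0 v1 v2 m2 d = 0" using V[of m2 d] z2 Mc by simp
  define \<alpha> where "\<alpha> = u0/m1^2"
  define \<beta> where "\<beta> = v0/d^2"
  have Ua: "\<forall>s t. qf u0 u1 u2 s t = \<alpha> * (m1* s - c*t)^2"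
    unfolding \<alpha>_def by (rule sq_factor[OF nz(6) nz(2) UV1 U0 V0])
  have Vb: "\<forall>s t. qf v0 v1 v2 s t = \<beta> * (d* s - m2*t)^2"
    unfolding \<beta>_def by (rule sq_factor[OF nz(3) nz(7) UV2 V0' U0'])
  define \<phi> where "\<phi> t = (\<alpha>*\<beta> - m3*m4)*((m1 - c*t)*(d - m2*t))^2" for t
  have cphi: "continuous_on UNIV \<phi>" unfolding \<phi>_def by (intro continuous_intros)
  have "\<phi> t = 0" if "t \<notin> {0}" for t
  proof -
    have "t \<noteq> 0" using that by simp
    then have "qf u0 u1 u2 1 t * qf v0 v1 v2 1 t = m3*m4*(M 1 t)^2" using UV by simp
    then show ?thesis unfolding \<phi>_def M_def using Ua[rule_format, of 1 t] Vb[rule_format, of 1 t] by algebra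
  qed
  then have "\<phi> 0 = 0" using cont_zero[OF cphi, of "{0}"] by blast
  then have ab: "\<alpha>*\<beta> = m3*m4" unfolding \<phi>_def using nz by simp
  have E: "\<alpha>*(m1* s - c*t)^2 + \<beta>*(d* s - m2*t)^2 = k*(-(d* s^2 + (m0-m1-m2)* s*t + c*t^2)) + (m3+m4)*M s t" for s t
  proof -
    have "\<alpha>*(m1* s - c*t)^2 + \<beta>*(d* s - m2*t)^2 = qf u0 u1 u2 s t + qf v0 v1 v2 s t"
      using Ua Vb by simp
    also have "\<dots> = k*(qf f g h s t + qf f' g' h' s t) + (m3+m4)*M s t"
      unfolding U V by algebra
    also have "qf f g h s t + qf f' g' h' s t = -(d* s^2 + (m0-m1-m2)* s*t + c*t^2)"
      unfolding qf_def using sums by algebra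
    finally show ?thesis .
  qed
  have E1: "\<alpha>*m1^2 + \<beta>*d^2 = -k*d - (m3+m4)*m1*d" using E[of 1 0] unfolding M_def by (simp add: algebra_simps power2_eq_square)
  have E2: "\<alpha>*c^2 + \<beta>*m2^2 = -k*c - (m3+m4)*c*m2" using E[of 0 1] unfolding M_def by (simp add: algebra_simps power2_eq_square)
  have E3: "\<alpha>*(m1-c)^2 + \<beta>*(d-m2)^2 = -k*(d + (m0-m1-m2) + c) + (m3+m4)*(c-m1)*(d-m2)"
    using E[of 1 1] unfolding M_def by (simp add: algebra_simps power2_eq_square)
  define K where "K = c*d"
  define p where "p = \<alpha>*c"
  define q where "q = \<beta>*d"
  have L1: "m1^2*p + K*q + (m3+m4)*m1*K + (K - m1*m2)*K = 0"
    using E1 unfolding p_def q_def K_def k_def by algebra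
  have L2: "K*p + m2^2*q + (m3+m4)*m2*K + (K - m1*m2)*K = 0"
    using E2 unfolding p_def q_def K_def k_def by algebra
  have L3: "-2*m1*p - 2*m2*q - (m3+m4)*(K + m1*m2) + (K - m1*m2)*(m0 - m1 - m2) = 0"
    using E1 E2 E3 unfolding p_def q_def K_def k_def by algebra
  have L4: "p*q = m3*m4*K" using ab unfolding p_def q_def K_def by algebra
  have Knz: "K \<noteq> 0" "K - m1*m2 \<noteq> 0" using nz unfolding K_def by auto
  show ?thesis unfolding altk_def using FA[OF L1 L2 L3 L4 Knz nz(1,2,3)] .
qed

lemma coreB:
  fixes m :: "nat \<Rightarrow> complex" and c d f g h :: complex and Y :: "complex \<Rightarrow> complex \<Rightarrow> nat \<Rightarrow> complex"
  assumes mnz: "\<And>i. i < 5 \<Longrightarrow> m i \<noteq> 0"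
    and Y0: "\<And>s t. Y s t 0 = m 0 * s * t"
    and Y1: "\<And>s t. Y s t 1 = - m 1 * s * t + c * t^2"
    and Y2: "\<And>s t. Y s t 2 = d * s^2 - m 2 * s * t"
    and Y3: "\<And>s t. Y s t 3 = qf f g h s t"
    and Y4: "\<And>s t. Y s t 4 = - (Y s t 0 + Y s t 1 + Y s t 2 + Y s t 3)"
    and hH: "\<And>s t. Hform m (Y s t) = 0"
    and nn: "\<And>s t i j k. (s,t) \<noteq> (0,0) \<Longrightarrow> i<5 \<Longrightarrow> j<5 \<Longrightarrow> k<5 \<Longrightarrow> i\<noteq>j \<Longrightarrow> i\<noteq>k \<Longrightarrow> j\<noteq>k
              \<Longrightarrow> \<not> (Y s t i = 0 \<and> Y s t j = 0 \<and> Y s t k = 0)"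
    and m12: "\<And>s t. (s,t) \<noteq> (0,0) \<Longrightarrow> \<not> (Y s t 1 = 0 \<and> Y s t 2 = 0)"
  shows "kform m = 0"
proof -
  define m0 where "m0 = m 0"
  define m1 where "m1 = m 1"
  define m2 where "m2 = m 2"
  define m3 where "m3 = m 3"
  define m4 where "m4 = m 4"
  have nz: "m0 \<noteq> 0" "m1 \<noteq> 0" "m2 \<noteq> 0" "m3 \<noteq> 0" "m4 \<noteq> 0"
    using mnz[of 0] mnz[of 1] mnz[of 2] mnz[of 3] mnz[of 4] unfolding m0_def m1_def m2_def m3_def m4_def by auto
  define f' where "f' = -(d+f)"
  define g' where "g' = -(m0 - m1 - m2 + g)"
  define h' where "h' = -(c+h)"
  have sums: "f + f' = -d" "g + g' = -(m0 - m1 - m2)" "h + h' = -c"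
    unfolding f'_def g'_def h'_def by simp_all
  have Y4': "Y s t 4 = qf f' g' h' s t" for s t
    unfolding Y4 Y0 Y1 Y2 Y3 qf_def f'_def g'_def h'_def m0_def m1_def m2_def by algebra
  have c0: "c \<noteq> 0"
  proof
    assume "c = 0"
    then have "Y 0 1 1 = 0" "Y 0 1 2 = 0" using Y1[of 0 1] Y2[of 0 1] by simp_all
    then show False using m12[of 0 1] by simp
  qed
  have d0: "d \<noteq> 0"
  proof
    assume "d = 0"
    then have "Y 1 0 1 = 0" "Y 1 0 2 = 0" using Y1[of 1 0] Y2[of 1 0] by simp_all
    then show False using m12[of 1 0] by simp
  qed
  have k0: "c*d - m1*m2 \<noteq> 0"
  proof
    assume k: "c*d - m1*m2 = 0"
    have "Y c m1 1 = 0" unfolding Y1 m1_def by algebra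
    moreover have "Y c m1 2 = c*(c*d - m1*m2)" unfolding Y2 m1_def m2_def by algebra
    ultimately show False using m12[of c m1] k c0 by simp
  qed
  have HG: "(c*d - m1*m2) * qf f g h s t * qf f' g' h' s t
      + (c*t - m1 * s)*(d * s - m2*t)*(m3 * qf f' g' h' s t + m4 * qf f g h s t) = 0"
    if "s \<noteq> 0" "t \<noteq> 0" for s t
  proof -
    have "Hform m (Y s t) = m0 * s^2 * t^2 * ((c*d - m1*m2) * qf f g h s t * qf f' g' h' s t
      + (c*t - m1 * s)*(d * s - m2*t)*(m3 * qf f' g' h' s t + m4 * qf f g h s t))"
      unfolding Hform_expand Y0 Y1 Y2 Y3 Y4' qf_def f'_def g'_def h'_def m0_def m1_def m2_def m3_def m4_def
      by algebra
    then show ?thesis using hH[of s t] nz that by simp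
  qed
  have R1: "qf f g h c m1 * qf f' g' h' c m1 = 0"
  proof -
    have "(c*d - m1*m2) * qf f g h c m1 * qf f' g' h' c m1
      + (c*m1 - m1 * c)*(d * c - m2*m1)*(m3 * qf f' g' h' c m1 + m4 * qf f g h c m1) = 0"
      using HG[of c m1] c0 nz by simp
    moreover have "c*m1 - m1 * c = 0" by (simp add: mult.commute)
    ultimately have "(c*d - m1*m2) * qf f g h c m1 * qf f' g' h' c m1 = 0" by simp
    then show ?thesis using k0 by auto
  qed
  have R2: "qf f g h m2 d * qf f' g' h' m2 d = 0"
  proof -
    have "(c*d - m1*m2) * qf f g h m2 d * qf f' g' h' m2 d
      + (c*d - m1 * m2)*(d * m2 - m2*d)*(m3 * qf f' g' h' m2 d + m4 * qf f g h m2 d) = 0"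
      using HG[of m2 d] d0 nz by simp
    moreover have "d * m2 - m2*d = 0" by (simp add: mult.commute)
    ultimately have "(c*d - m1*m2) * qf f g h m2 d * qf f' g' h' m2 d = 0" by simp
    then show ?thesis using k0 by auto
  qed
  have N1: "\<not> (qf f g h c m1 = 0 \<and> qf f' g' h' c m1 = 0)"
  proof -
    have "Y c m1 1 = 0" unfolding Y1 m1_def by algebra
    then show ?thesis using nn[of c m1 1 3 4] c0 Y3[of c m1] Y4'[of c m1] by auto
  qed
  have N2: "\<not> (qf f g h m2 d = 0 \<and> qf f' g' h' m2 d = 0)"
  proof -
    have "Y m2 d 2 = 0" unfolding Y2 m2_def by algebra
    then show ?thesis using nn[of m2 d 2 3 4] d0 Y3[of m2 d] Y4'[of m2 d] by auto
  qed
  have HGs: "(c*d - m1*m2) * qf f' g' h' s t * qf f g h s t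
      + (c*t - m1 * s)*(d * s - m2*t)*(m4 * qf f g h s t + m3 * qf f' g' h' s t) = 0"
    if "s \<noteq> 0" "t \<noteq> 0" for s t
    using HG[OF that] by (simp add: ac_simps)
  have sums': "f' + f = -d" "g' + g = -(m0 - m1 - m2)" "h' + h = -c" using sums by (simp_all add: ac_simps)
  have nz': "m0 \<noteq> 0" "m1 \<noteq> 0" "m2 \<noteq> 0" "m4 \<noteq> 0" "m3 \<noteq> 0" using nz by auto
  have alt: "altk m0 m1 m2 m3 m4 = 0"
  proof (cases "qf f g h c m1 = 0")
    case True
    then have n4: "qf f' g' h' c m1 \<noteq> 0" using N1 by simp
    show ?thesis
    proof (cases "qf f g h m2 d = 0")
      case True
      then show ?thesis using caseA[OF nz c0 d0 k0 HG \<open>qf f g h c m1 = 0\<close> True n4] by simp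
    next
      case False
      then have "qf f' g' h' m2 d = 0" using R2 by simp
      then show ?thesis using caseC[OF nz c0 d0 k0 sums HG \<open>qf f g h c m1 = 0\<close> _ n4 False] by simp
    qed
  next
    case False
    then have z4: "qf f' g' h' c m1 = 0" using R1 by simp
    show ?thesis
    proof (cases "qf f' g' h' m2 d = 0")
      case True
      then show ?thesis using caseA[OF nz' c0 d0 k0 HGs z4 True False] by simp
    next
      case F2: False
      then have "qf f g h m2 d = 0" using R2 by simp
      then have "altk m0 m1 m2 m4 m3 = 0" using caseC[OF nz' c0 d0 k0 sums' HGs z4 _ False F2] by simp
      then show ?thesis by (simp add: altk_swap)
    qed
  qed
  show ?thesis unfolding kform_altk using alt unfolding m0_def m1_def m2_def m3_def m4_def .
qed


lemma coreG:
  fixes m :: "nat \<Rightarrow> complex" and a b c d e f g h :: complex and Y :: "complex \<Rightarrow> complex \<Rightarrow> nat \<Rightarrow> complex"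
  assumes mnz: "\<And>i. i < 5 \<Longrightarrow> m i \<noteq> 0"
    and Y0: "\<And>s t. Y s t 0 = a * s * t"
    and Y1: "\<And>s t. Y s t 1 = b * s * t + c * t^2"
    and Y2: "\<And>s t. Y s t 2 = d * s^2 + e * s * t"
    and Y3: "\<And>s t. Y s t 3 = qf f g h s t"
    and Y4: "\<And>s t. Y s t 4 = - (Y s t 0 + Y s t 1 + Y s t 2 + Y s t 3)"
    and hH: "\<And>s t. Hform m (Y s t) = 0"
    and nn: "\<And>s t i j k. (s,t) \<noteq> (0,0) \<Longrightarrow> i<5 \<Longrightarrow> j<5 \<Longrightarrow> k<5 \<Longrightarrow> i\<noteq>j \<Longrightarrow> i\<noteq>k \<Longrightarrow> j\<noteq>k
              \<Longrightarrow> \<not> (Y s t i = 0 \<and> Y s t j = 0 \<and> Y s t k = 0)"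
    and m12: "\<And>s t. (s,t) \<noteq> (0,0) \<Longrightarrow> \<not> (Y s t 1 = 0 \<and> Y s t 2 = 0)"
  shows "kform m = 0"
proof -
  have nz: "m 0 \<noteq> 0" "m 1 \<noteq> 0" "m 2 \<noteq> 0" "m 3 \<noteq> 0" "m 4 \<noteq> 0" using mnz by auto
  have P10: "Y 1 0 0 = 0" "Y 1 0 1 = 0" "Y 1 0 2 = d" "Y 1 0 3 = f" "Y 1 0 4 = -(d+f)"
    using Y0[of 1 0] Y1[of 1 0] Y2[of 1 0] Y3[of 1 0] Y4[of 1 0] by (simp_all add: qf_def)
  have P01: "Y 0 1 0 = 0" "Y 0 1 1 = c" "Y 0 1 2 = 0" "Y 0 1 3 = h" "Y 0 1 4 = -(c+h)"
    using Y0[of 0 1] Y1[of 0 1] Y2[of 0 1] Y3[of 0 1] Y4[of 0 1] by (simp_all add: qf_def)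
  have c0: "c \<noteq> 0" using m12[of 0 1] P01 by auto
  have d0: "d \<noteq> 0" using m12[of 1 0] P10 by auto
  have f0: "f \<noteq> 0" using nn[of 1 0 0 1 3] P10 by auto
  have df0: "d + f \<noteq> 0"
  proof
    assume "d + f = 0"
    then have "Y 1 0 4 = 0" using P10 by simp
    then show False using nn[of 1 0 0 1 4] P10 by auto
  qed
  have h0: "h \<noteq> 0" using nn[of 0 1 0 2 3] P01 by auto
  have ch0: "c + h \<noteq> 0"
  proof
    assume "c + h = 0"
    then have "Y 0 1 4 = 0" using P01 by simp
    then show False using nn[of 0 1 0 2 4] P01 by auto
  qed
  have HY: "Hform m (Y s t) = m 0 * (Y s t 1 * Y s t 2 * Y s t 3 * Y s t 4) + m 1 * (Y s t 0 * Y s t 2 * Y s t 3 * Y s t 4)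
   + m 2 * (Y s t 0 * Y s t 1 * Y s t 3 * Y s t 4) + m 3 * (Y s t 0 * Y s t 1 * Y s t 2 * Y s t 4)
   + m 4 * (Y s t 0 * Y s t 1 * Y s t 2 * Y s t 3)" for s t
    by (rule Hform_expand)
  define X3 where "X3 s t = qf f g h s t" for s t
  define X4 where "X4 s t = -(a * s * t + (b * s * t + c * t^2) + (d * s^2 + e * s * t) + qf f g h s t)" for s t
  define F where "F s t = m 0*(b * s+c*t)*(d * s+e*t)*X3 s t*X4 s t + m 1*a * s*(d * s+e*t)*X3 s t*X4 s t
       + m 2*a*t*(b * s+c*t)*X3 s t*X4 s t + a * s*t*(b * s+c*t)*(d * s+e*t)*(m 3*X4 s t + m 4*X3 s t)" for s t
  have HF: "Hform m (Y s t) = s * t * F s t" for s t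
    unfolding HY Y0 Y1 Y2 Y3 Y4 F_def X3_def X4_def by algebra
  have Fs0: "F w z = -(m 0 * b + m 1 * a) * (d * f * (d + f))" if "w = 1" "z = 0" for w z
    using that unfolding F_def X3_def X4_def qf_def by algebra
  have F0t: "F z w = -(m 0 * e + m 2 * a) * (c * h * (c + h))" if "z = 0" "w = 1" for w z
    using that unfolding F_def X3_def X4_def qf_def by algebra
  have a0: "a \<noteq> 0"
  proof
    assume a: "a = 0"
    define \<Phi> where "\<Phi> s t = (d * s^2 + e * s * t) * X3 s t * X4 s t" for s t
    have HP: "Hform m (Y s t) = m 0 * (b * s * t + c * t^2) * \<Phi> s t" for s t
      using a unfolding HY Y0 Y1 Y2 Y3 Y4 \<Phi>_def X3_def X4_def by algebra
    have P0: "\<Phi> w z = - (d * f * (d + f))" if "w = 1" "z = 0" for w z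
      using a that unfolding \<Phi>_def X3_def X4_def qf_def by algebra
    have cphi: "continuous_on UNIV (\<lambda>t. \<Phi> 1 t)" unfolding \<Phi>_def X3_def X4_def qf_def by (intro continuous_intros)
    have "\<Phi> 1 t = 0" if "t \<notin> {0, -b/c}" for t
    proof -
      have "b * 1 * t + c*t^2 \<noteq> 0"
      proof
        assume "b * 1 * t + c*t^2 = 0"
        then have "t*(b + c*t) = 0" by (simp add: algebra_simps power2_eq_square)
        then have "b + c*t = 0" using that by simp
        then have "t = -b/c" using c0 by (simp add: field_simps add_eq_0_iff)
        then show False using that by simp
      qed
      then show ?thesis using hH[of 1 t] HP[of 1 t] nz by simp
    qed
    then have "\<Phi> 1 0 = 0" using cont_zero[OF cphi, of "{0, -b/c}"] by blast
    moreover have "\<Phi> 1 0 = - (d * f * (d + f))" by (rule P0) simp_all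
    ultimately have "d * f * (d + f) = 0" by simp
    then show False using d0 f0 df0 by simp
  qed
  have cF1: "continuous_on UNIV (\<lambda>t. F 1 t)" unfolding F_def X3_def X4_def qf_def by (intro continuous_intros)
  have cF2: "continuous_on UNIV (\<lambda>s. F s 1)" unfolding F_def X3_def X4_def qf_def by (intro continuous_intros)
  have tan1: "m 0 * b + m 1 * a = 0"
  proof -
    have "F 1 t = 0" if "t \<notin> {0}" for t
      using hH[of 1 t] HF[of 1 t] that by simp
    then have "F 1 0 = 0" using cont_zero[OF cF1, of "{0}"] by blast
    moreover have "F 1 0 = -(m 0 * b + m 1 * a) * (d * f * (d + f))" by (rule Fs0) simp_all
    ultimately have "(m 0 * b + m 1 * a) * (d * f * (d + f)) = 0" by (metis minus_mult_left neg_equal_0_iff_equal)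
    then show ?thesis using d0 f0 df0 by simp
  qed
  have tan2: "m 0 * e + m 2 * a = 0"
  proof -
    have "F s 1 = 0" if "s \<notin> {0}" for s
      using hH[of s 1] HF[of s 1] that by simp
    then have "F 0 1 = 0" using cont_zero[OF cF2, of "{0}"] by blast
    moreover have "F 0 1 = -(m 0 * e + m 2 * a) * (c * h * (c + h))" by (rule F0t) simp_all
    ultimately have "(m 0 * e + m 2 * a) * (c * h * (c + h)) = 0" by (metis minus_mult_left neg_equal_0_iff_equal)
    then show ?thesis using c0 h0 ch0 by simp
  qed
  define lam where "lam = m 0 / a"
  have l0: "lam \<noteq> 0" using a0 nz unfolding lam_def by simp
  have la: "lam * a = m 0" unfolding lam_def using a0 by simp
  have lb: "lam * b = - m 1" unfolding lam_def using a0 tan1 by (simp add: field_simps eq_neg_iff_add_eq_0)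
  have le: "lam * e = - m 2" unfolding lam_def using a0 tan2 by (simp add: field_simps eq_neg_iff_add_eq_0)
  define Z where "Z s t i = lam * Y s t i" for s t i
  show ?thesis
  proof (rule coreB[where c="lam*c" and d="lam*d" and f="lam*f" and g="lam*g" and h="lam*h" and Y=Z])
    show "\<And>i. i < 5 \<Longrightarrow> m i \<noteq> 0" by (rule mnz)
    show "\<And>s t. Z s t 0 = m 0 * s * t" unfolding Z_def Y0 using la by (simp add: mult.assoc[symmetric])
    show "\<And>s t. Z s t 1 = - m 1 * s * t + lam * c * t^2" unfolding Z_def Y1
      by (simp add: distrib_left mult.assoc[symmetric] lb)
    show "\<And>s t. Z s t 2 = lam * d * s^2 - m 2 * s * t" unfolding Z_def Y2
      by (simp add: distrib_left mult.assoc[symmetric] le)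
    show "\<And>s t. Z s t 3 = qf (lam * f) (lam * g) (lam * h) s t" unfolding Z_def Y3 qf_def by algebra
    show "\<And>s t. Z s t 4 = - (Z s t 0 + Z s t 1 + Z s t 2 + Z s t 3)" unfolding Z_def by (subst Y4) (simp add: algebra_simps)
    show "\<And>s t. Hform m (Z s t) = 0"
    proof -
      fix s t :: complex
      have "Hform m (Z s t) = lam^4 * Hform m (Y s t)" unfolding Hform_expand Z_def by algebra
      then show "Hform m (Z s t) = 0" using hH by simp
    qed
    show "\<And>s t i j k. (s,t) \<noteq> (0,0) \<Longrightarrow> i<5 \<Longrightarrow> j<5 \<Longrightarrow> k<5 \<Longrightarrow> i\<noteq>j \<Longrightarrow> i\<noteq>k \<Longrightarrow> j\<noteq>k
              \<Longrightarrow> \<not> (Z s t i = 0 \<and> Z s t j = 0 \<and> Z s t k = 0)"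
    proof -
      fix s t :: complex and i j k :: nat
      assume h: "(s,t) \<noteq> (0,0)" "i<5" "j<5" "k<5" "i\<noteq>j" "i\<noteq>k" "j\<noteq>k"
      have zz: "Z s t n = 0 \<longleftrightarrow> Y s t n = 0" for n by (simp add: Z_def l0)
      show "\<not> (Z s t i = 0 \<and> Z s t j = 0 \<and> Z s t k = 0)" unfolding zz by (rule nn[OF h])
    qed
    show "\<And>s t. (s,t) \<noteq> (0,0) \<Longrightarrow> \<not> (Z s t 1 = 0 \<and> Z s t 2 = 0)"
    proof -
      fix s t :: complex
      assume h: "(s,t) \<noteq> (0,0)"
      have zz: "Z s t n = 0 \<longleftrightarrow> Y s t n = 0" for n by (simp add: Z_def l0)
      show "\<not> (Z s t 1 = 0 \<and> Z s t 2 = 0)" unfolding zz by (rule m12[OF h])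
    qed
  qed
qed

theorem lemma7:
  fixes \<mu> A B C :: "nat \<Rightarrow> complex"
  assumes mu_nz: "\<forall>i<5. \<mu> i \<noteq> 0"
    and cubic_smooth: "smooth_surface_P3 (Sform \<mu>)"
    and conic: "conic_data A B C"
    and in_smooth_locus: "\<forall>s t. (s, t) \<noteq> (0, 0) \<longrightarrow> smooth_pt_P3 (Hform \<mu>) (conic_pt A B C s t)"
    and meets01: "\<exists>s t. (s, t) \<noteq> (0, 0) \<and> conic_pt A B C s t 0 = 0 \<and> conic_pt A B C s t 1 = 0"
    and meets02: "\<exists>s t. (s, t) \<noteq> (0, 0) \<and> conic_pt A B C s t 0 = 0 \<and> conic_pt A B C s t 2 = 0"
    and misses12: "\<not> (\<exists>s t. (s, t) \<noteq> (0, 0) \<and> conic_pt A B C s t 1 = 0 \<and> conic_pt A B C s t 2 = 0)"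
  shows "kform \<mu> = 0 \<and> irreducible (kform mvar)"
proof -
  define X where "X s t = conic_pt A B C s t" for s t
  have Xi: "X s t i = s^2 * A i + s * t * B i + t^2 * C i" for s t i unfolding X_def conic_pt_def by simp
  have sA: "(\<Sum>i<5. A i) = 0" and sB: "(\<Sum>i<5. B i) = 0" and sC: "(\<Sum>i<5. C i) = 0"
    using conic unfolding conic_data_def by auto
  have sumX: "X s t 4 = -(X s t 0 + X s t 1 + X s t 2 + X s t 3)" for s t
  proof -
    have "(\<Sum>i<5. X s t i) = s^2 * (\<Sum>i<5. A i) + s * t * (\<Sum>i<5. B i) + t^2 * (\<Sum>i<5. C i)"
      unfolding Xi by (simp add: sum.distrib sum_distrib_left)
    then have "(\<Sum>i<5. X s t i) = 0" using sA sB sC by simp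
    then have h: "X s t 0 + X s t 1 + X s t 2 + X s t 3 + X s t 4 = 0" unfolding sum5 .
    have "X s t 4 = (X s t 0 + X s t 1 + X s t 2 + X s t 3 + X s t 4) - (X s t 0 + X s t 1 + X s t 2 + X s t 3)"
      by simp
    then show ?thesis unfolding h by simp
  qed
  have hX: "Hform \<mu> (X s t) = 0" for s t
  proof (cases "(s, t) = (0, 0)")
    case True
    then have "X s t 0 = 0" "X s t 1 = 0" by (auto simp: Xi)
    then show ?thesis using H_two_zero[of 0 1 "X s t" \<mu>] by simp
  next
    case False
    then show ?thesis using in_smooth_locus unfolding X_def smooth_pt_P3_def by auto
  qed
  have nodeX: "\<not> (X s t i = 0 \<and> X s t j = 0 \<and> X s t k = 0)"
    if "(s,t) \<noteq> (0,0)" "i<5" "j<5" "k<5" "i\<noteq>j" "i\<noteq>k" "j\<noteq>k" for s t i j k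
    using no_node[of \<mu> "X s t" i j k] in_smooth_locus that unfolding X_def by auto
  obtain s1 t1 where P1: "(s1,t1) \<noteq> (0,0)" "X s1 t1 0 = 0" "X s1 t1 1 = 0"
    using meets01 unfolding X_def by blast
  obtain s2 t2 where P2: "(s2,t2) \<noteq> (0,0)" "X s2 t2 0 = 0" "X s2 t2 2 = 0"
    using meets02 unfolding X_def by blast
  have del: "s1 * t2 - s2 * t1 \<noteq> 0"
  proof
    assume dz: "s1 * t2 - s2 * t1 = 0"
    obtain lam where lam: "s2 = lam * s1" "t2 = lam * t1"
    proof (cases "s1 = 0")
      case True
      then have "t1 \<noteq> 0" using P1 by simp
      moreover have "s2 * t1 = 0" using dz True by simp
      ultimately have "s2 = 0" by simp
      then show ?thesis using that[of "t2/t1"] True \<open>t1 \<noteq> 0\<close> by simp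
    next
      case False
      have "t2 = (s2/s1) * t1" using dz False by (simp add: field_simps)
      then show ?thesis using that[of "s2/s1"] False by simp
    qed
    have l0: "lam \<noteq> 0" using lam P2 by auto
    have "X s2 t2 2 = lam^2 * X s1 t1 2" unfolding lam Xi by algebra
    then have "X s1 t1 2 = 0" using P2 l0 by simp
    then show False using misses12 P1 unfolding X_def by blast
  qed
  define Y where "Y s t = X (s * s1 + t * s2) (s * t1 + t * t2)" for s t
  define Bp where "Bp i = 2 * s1 * s2 * A i + (s1 * t2 + s2 * t1) * B i + 2 * t1 * t2 * C i" for i
  have Yi: "Y s t i = s^2 * X s1 t1 i + s * t * Bp i + t^2 * X s2 t2 i" for s t i
    unfolding Y_def Xi Bp_def by algebra
  have tnz: "(s * s1 + t * s2, s * t1 + t * t2) \<noteq> (0,0)" if "(s,t) \<noteq> (0,0)" for s t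
  proof
    assume "(s * s1 + t * s2, s * t1 + t * t2) = (0,0)"
    then have e1: "s * s1 + t * s2 = 0" and e2: "s * t1 + t * t2 = 0" by auto
    have "s * (s1 * t2 - s2 * t1) = t2 * (s * s1 + t * s2) - s2 * (s * t1 + t * t2)" by algebra
    then have "s = 0" using e1 e2 del by simp
    moreover have "t * (s1 * t2 - s2 * t1) = s1 * (s * t1 + t * t2) - t1 * (s * s1 + t * s2)" by algebra
    then have "t = 0" using e1 e2 del by simp
    ultimately show False using that by simp
  qed
  have k0: "kform \<mu> = 0"
  proof (rule coreG[where a="Bp 0" and b="Bp 1" and c="X s2 t2 1" and d="X s1 t1 2" and e="Bp 2"
        and f="X s1 t1 3" and g="Bp 3" and h="X s2 t2 3" and Y=Y and m=\<mu>])
    show "\<And>i. i < 5 \<Longrightarrow> \<mu> i \<noteq> 0" using mu_nz by simp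
    show "\<And>s t. Y s t 0 = Bp 0 * s * t"
    proof -
      fix s t :: complex
      have "Y s t 0 = s^2 * 0 + s * t * Bp 0 + t^2 * 0" using Yi[of s t 0] unfolding P1(2) P2(2) .
      then show "Y s t 0 = Bp 0 * s * t" by (simp add: ac_simps)
    qed
    show "\<And>s t. Y s t 1 = Bp 1 * s * t + X s2 t2 1 * t^2"
    proof -
      fix s t :: complex
      have "Y s t 1 = s^2 * 0 + s * t * Bp 1 + t^2 * X s2 t2 1" using Yi[of s t 1] unfolding P1(3) .
      then show "Y s t 1 = Bp 1 * s * t + X s2 t2 1 * t^2" by (simp add: ac_simps)
    qed
    show "\<And>s t. Y s t 2 = X s1 t1 2 * s^2 + Bp 2 * s * t"
    proof -
      fix s t :: complex
      have "Y s t 2 = s^2 * X s1 t1 2 + s * t * Bp 2 + t^2 * 0" using Yi[of s t 2] unfolding P2(3) .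
      then show "Y s t 2 = X s1 t1 2 * s^2 + Bp 2 * s * t" by (simp add: ac_simps)
    qed
    show "\<And>s t. Y s t 3 = qf (X s1 t1 3) (Bp 3) (X s2 t2 3) s t" by (simp add: Yi qf_def ac_simps)
    show "\<And>s t. Y s t 4 = - (Y s t 0 + Y s t 1 + Y s t 2 + Y s t 3)" unfolding Y_def by (rule sumX)
    show "\<And>s t. Hform \<mu> (Y s t) = 0" unfolding Y_def by (rule hX)
    show "\<And>s t i j k. (s,t) \<noteq> (0,0) \<Longrightarrow> i<5 \<Longrightarrow> j<5 \<Longrightarrow> k<5 \<Longrightarrow> i\<noteq>j \<Longrightarrow> i\<noteq>k \<Longrightarrow> j\<noteq>k
              \<Longrightarrow> \<not> (Y s t i = 0 \<and> Y s t j = 0 \<and> Y s t k = 0)"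
      unfolding Y_def by (rule nodeX[OF tnz])
    show "\<And>s t. (s,t) \<noteq> (0,0) \<Longrightarrow> \<not> (Y s t 1 = 0 \<and> Y s t 2 = 0)"
    proof -
      fix s t :: complex
      assume h: "(s,t) \<noteq> (0,0)"
      show "\<not> (Y s t 1 = 0 \<and> Y s t 2 = 0)"
        using misses12 tnz[OF h] unfolding Y_def X_def by blast
    qed
  qed
  show ?thesis using k0 irred_kform by simp
qed

end
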